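(* Let $u=s_{i_1}\cdots s_{i_l}$ and $v=s_{j_1}\cdots s_{j_m}$ (both nonempty) be reduced words for glides in $\hat S_n$, $v$ of offset $k_2$, with $vu$ reduced, and let $\alpha_1,\dots,\alpha_n\in\mathbb R$ satisfy $\alpha_i<\alpha_j$ whenever $i\triangleleft j$ in the wiring diagram of $v|u$. Let $\tilde v=\rho^{-k_2}(v)$ with reduced word $s_{j_1-k_2}\cdots s_{j_m-k_2}$, and let $(t_1,\dots,t_n)$, $(t'_1,\dots,t'_n)$ be representatives of $t(u)$ and $t(\tilde v)$. Let $b\neq c$ be real numbers in the same connected component of $\mathbb R\setminus\{\alpha_1,\dots,\alpha_n\}$ with $f(b)=f(c)$ where $f(t)=\prod_j(t-\alpha_j)$ (a $1$-soliton), and $B_j=\frac{b-\alpha_j}{c-\alpha_j}$. Then the speed $$p=\frac{t'_1\log B_1+\dots+t'_n\log B_n}{t_1\log B_1+\dots+t_n\log B_n}$$ is positive.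
   Context: $\hat S_n$: generators $s_0,\dots,s_{n-1}$ (indices mod $n$), relations $s_i^2=1$, $s_is_js_i=s_js_is_j$ if $i-j\equiv\pm1$, $s_is_j=s_js_i$ if $i-j\not\equiv0,\pm1$; $\rho$ is the automorphism $s_i\mapsto s_{i+1}$. $\phi:\hat S_n\to S_n$, $s_i\mapsto(i\ i+1)$, $s_0\mapsto(1\ n)$; a glide of offset $k$ is $g$ with $\phi(g)(j)\equiv j+k\pmod n$. Wiring diagram: letters drawn left to right on a cylinder with wires in positions $1,\dots,n$ (mod $n$), $s_i$ a crossing of positions $i,i+1$ ($s_0$: $n$ and $1$); the upper wire of $s_i$ passes from position $i+1$ to $i$ (for $s_0$ from $1$ to $n$). In the diagram of $v|u$, wire $i$ is the wire in position $i$ at the cut between $v$ and $u$; $i\triangleleft j$ means wires $i,j$ cross with $j$ the upper wire. Trajectory of a glide $g$ with a reduced word: lift the diagram of $|g$ to the universal cover (integer positions, wires labelled by starting position); a chamber with set $S$ of underlying wire labels has label $(\mathbf s_i)$, $\mathbf s_i=\lceil\max\{b\in S:b\equiv i\bmod n\}/n\rceil$; $t(g)\in\mathbb Z^n/\mathbb Z(1,\dots,1)$ is the label of the chamber directly above wire $1$ at the right end minus that at the left end. *)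

theory Defs
  imports "HOL-Analysis.Analysis"
begin

(* Words in the generators s_0,...,s_{n-1} of the affine symmetric group are
   lists of natural numbers a < n (the letter a stands for s_a), read left to right. *)

definition letters_ok :: "nat \<Rightarrow> nat list \<Rightarrow> bool" where
  "letters_ok n w \<longleftrightarrow> (\<forall>a\<in>set w. a < n)"

definition adj_idx :: "nat \<Rightarrow> nat \<Rightarrow> nat \<Rightarrow> bool" where
  "adj_idx n i j \<longleftrightarrow> (i + 1) mod n = j mod n \<or> (j + 1) mod n = i mod n"

inductive word_move :: "nat \<Rightarrow> nat list \<Rightarrow> nat list \<Rightarrow> bool" for n where
  square: "word_move n (xs @ [i, i] @ ys) (xs @ ys)"
| braid: "adj_idx n i j \<Longrightarrow> word_move n (xs @ [i, j, i] @ ys) (xs @ [j, i, j] @ ys)"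
| comm: "i \<noteq> j \<Longrightarrow> \<not> adj_idx n i j \<Longrightarrow> word_move n (xs @ [i, j] @ ys) (xs @ [j, i] @ ys)"

definition word_equiv :: "nat \<Rightarrow> nat list \<Rightarrow> nat list \<Rightarrow> bool" where
  "word_equiv n = equivclp (word_move n)"

definition reduced_word :: "nat \<Rightarrow> nat list \<Rightarrow> bool" where
  "reduced_word n w \<longleftrightarrow> letters_ok n w \<and>
     (\<forall>w'. letters_ok n w' \<and> word_equiv n w w' \<longrightarrow> length w \<le> length w')"

(* the homomorphism \<phi> : \<hat>S_n \<rightarrow> S_n on {1..n}; \<phi>(s_{i1} ... s_{il}) = \<phi>(s_{i1}) o ... o \<phi>(s_{il}) *)
definition swap_pts :: "nat \<Rightarrow> nat \<Rightarrow> nat \<Rightarrow> nat" where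
  "swap_pts x y p = (if p = x then y else if p = y then x else p)"

definition lo_pos :: "nat \<Rightarrow> nat \<Rightarrow> nat" where
  "lo_pos n a = (if a = 0 then n else a)"

definition hi_pos :: "nat \<Rightarrow> nat" where
  "hi_pos a = a + 1"

definition phi_gen :: "nat \<Rightarrow> nat \<Rightarrow> nat \<Rightarrow> nat" where
  "phi_gen n a = swap_pts (lo_pos n a) (hi_pos a)"

definition phi :: "nat \<Rightarrow> nat list \<Rightarrow> nat \<Rightarrow> nat" where
  "phi n w = foldr (\<lambda>a f. phi_gen n a \<circ> f) w id"

definition glide :: "nat \<Rightarrow> nat list \<Rightarrow> int \<Rightarrow> bool" where
  "glide n w k \<longleftrightarrow> (\<forall>j\<in>{1..n}. int (phi n w j) mod int n = (int j + k) mod int n)"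

(* \<rho>^{-k}: the word s_{j_1-k} ... s_{j_m-k} *)
definition rho_shift :: "nat \<Rightarrow> int \<Rightarrow> nat list \<Rightarrow> nat list" where
  "rho_shift n k w = map (\<lambda>j. nat ((int j - k) mod int n)) w"

(* Wiring diagram on the cylinder, positions 1..n.  A configuration c maps a position
   to the wire occupying it.  Letter a crosses positions lo_pos n a and hi_pos a;
   the upper wire passes from hi_pos a (left) to lo_pos n a (right).
   A pair (x, y) records a crossing of wires x and y with y the upper wire. *)
fun cross_right :: "nat \<Rightarrow> (nat \<Rightarrow> nat) \<Rightarrow> nat list \<Rightarrow> (nat \<times> nat) set" where
  "cross_right n c [] = {}"
| "cross_right n c (a # w) =
     insert (c (lo_pos n a), c (hi_pos a))
       (cross_right n (c \<circ> swap_pts (lo_pos n a) (hi_pos a)) w)"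

(* going leftwards from the cut: c is the configuration to the right of the letter *)
fun cross_left :: "nat \<Rightarrow> (nat \<Rightarrow> nat) \<Rightarrow> nat list \<Rightarrow> (nat \<times> nat) set" where
  "cross_left n c [] = {}"
| "cross_left n c (a # w) =
     insert (c (hi_pos a), c (lo_pos n a))
       (cross_left n (c \<circ> swap_pts (lo_pos n a) (hi_pos a)) w)"

(* i \<triangleleft> j in the wiring diagram of v|u (wire i = wire in position i at the cut) *)
definition wire_tri :: "nat \<Rightarrow> nat list \<Rightarrow> nat list \<Rightarrow> nat \<Rightarrow> nat \<Rightarrow> bool" where
  "wire_tri n v u i j \<longleftrightarrow> (i, j) \<in> cross_right n id u \<union> cross_left n id (rev v)"

(* Universal cover: integer positions; letter a crosses positions q, q+1 for all q \<equiv> a mod n. *)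
definition cover_step :: "nat \<Rightarrow> nat \<Rightarrow> int \<Rightarrow> int" where
  "cover_step n a p =
     (if p mod int n = int a mod int n then p + 1
      else if p mod int n = (int a + 1) mod int n then p - 1 else p)"

(* final position of the lifted wire starting at position b *)
definition end_pos :: "nat \<Rightarrow> nat list \<Rightarrow> int \<Rightarrow> int" where
  "end_pos n w b = foldl (\<lambda>p a. cover_step n a p) b w"

(* label of a chamber whose set of underlying wire labels is S *)
definition chamber_label :: "nat \<Rightarrow> int set \<Rightarrow> nat \<Rightarrow> int" where
  "chamber_label n S i =
     \<lceil>real_of_int (GREATEST b. b \<in> S \<and> b mod int n = int i mod int n) / real n\<rceil>"

(* (t_1,...,t_n) is a representative of t(g) \<in> Z^n / Z(1,...,1), g given by the word w *)
definition traj_rep :: "nat \<Rightarrow> nat list \<Rightarrow> (nat \<Rightarrow> int) \<Rightarrow> bool" where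
  "traj_rep n w t \<longleftrightarrow> (\<exists>c::int. \<forall>i\<in>{1..n}.
      t i = chamber_label n {b. end_pos n w b \<le> end_pos n w 1} i
            - chamber_label n {b. b \<le> 1} i + c)"

end

theory Submission
  imports Defs
begin

definition rep :: "nat \<Rightarrow> int \<Rightarrow> nat" where
  "rep n p = nat ((p - 1) mod int n) + 1"

lemma rep_eq_iff:
  assumes "0 < n"
  shows "(rep n p = x) \<longleftrightarrow> (1 \<le> x \<and> x \<le> n \<and> int x mod int n = p mod int n)"
proof -
  have A: "0 \<le> (p - 1) mod int n" "(p - 1) mod int n < int n" using assms by auto
  show ?thesis
  proof
    assume "rep n p = x"
    then have x: "int x = (p - 1) mod int n + 1" using A unfolding rep_def by auto
    have "int x mod int n = p mod int n"
      unfolding x by (metis add.commute diff_add_cancel mod_add_right_eq)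
    then show "1 \<le> x \<and> x \<le> n \<and> int x mod int n = p mod int n" using x A by auto
  next
    assume h: "1 \<le> x \<and> x \<le> n \<and> int x mod int n = p mod int n"
    then have "(int x - 1) mod int n = (p - 1) mod int n" by (metis mod_diff_left_eq)
    moreover have "(int x - 1) mod int n = int x - 1" using h by (intro mod_pos_pos_trivial) auto
    ultimately show "rep n p = x" unfolding rep_def using h by auto
  qed
qed

lemma rep_range: "0 < n \<Longrightarrow> 1 \<le> rep n p \<and> rep n p \<le> n \<and> int (rep n p) mod int n = p mod int n"
  using rep_eq_iff by blast

lemma rep_of_nat: "0 < n \<Longrightarrow> 1 \<le> i \<Longrightarrow> i \<le> n \<Longrightarrow> rep n (int i) = i"
  using rep_eq_iff by blast

lemma rep_lo: assumes "2 \<le> n" "a < n" "p mod int n = int a mod int n"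
  shows "rep n p = lo_pos n a"
  using assms unfolding lo_pos_def
  by (subst rep_eq_iff) (auto simp: zmod_int[symmetric])

lemma rep_hi: assumes "2 \<le> n" "a < n" "p mod int n = (int a + 1) mod int n"
  shows "rep n p = hi_pos a"
  using assms unfolding hi_pos_def
  by (subst rep_eq_iff) (auto simp: add.commute)


lemma mod_succ_ne: assumes "2 \<le> n" shows "(p + 1) mod int n \<noteq> p mod int n"
proof
  assume "(p + 1) mod int n = p mod int n"
  then have "int n dvd (p + 1) - p" by (metis mod_eq_dvd_iff)
  then have "int n dvd 1" by simp
  then show False using assms by simp
qed

lemma mod_shift_eq: "((p + q) mod int n = (r + q) mod int n) = (p mod int n = r mod int n)"
  by (metis add_diff_cancel_right' mod_add_left_eq mod_diff_left_eq)

lemma cs_inv: assumes "3 \<le> n" shows "cover_step n a (cover_step n a p) = p"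
proof -
  have n2: "2 \<le> n" using assms by simp
  have x: "(int a + 1) mod int n \<noteq> int a mod int n" using mod_succ_ne[OF n2] .
  show ?thesis
  proof (cases "p mod int n = int a mod int n")
    case True
    then have "(p + 1) mod int n = (int a + 1) mod int n" by (metis mod_add_left_eq)
    moreover have "(p + 1) mod int n \<noteq> int a mod int n" using True mod_succ_ne[OF n2, of p] by simp
    ultimately show ?thesis using True unfolding cover_step_def by simp
  next
    case F: False
    show ?thesis
    proof (cases "p mod int n = (int a + 1) mod int n")
      case True
      then have "(p - 1) mod int n = int a mod int n"
        by (metis add_diff_cancel_right' mod_diff_left_eq)
      then show ?thesis using True F unfolding cover_step_def by simp
    next
      case False
      then show ?thesis using F unfolding cover_step_def by simp
    qed
  qed
qed

lemma cs_bound: "cover_step n a p \<le> p + 1 \<and> p - 1 \<le> cover_step n a p"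
  unfolding cover_step_def by auto

lemma cs_up: "cover_step n a p = p + 1 \<Longrightarrow> p mod int n = int a mod int n"
  unfolding cover_step_def by (auto split: if_splits)

lemma cs_period: "cover_step n a (p + m * int n) = cover_step n a p + m * int n"
  unfolding cover_step_def by auto

lemma cs_rho: assumes "0 < n" shows "cover_step n (nat ((int j - k) mod int n)) p = cover_step n j (p + k) - k"
proof -
  define a' where "a' = nat ((int j - k) mod int n)"
  have ia: "int a' = (int j - k) mod int n" unfolding a'_def using assms by auto
  have m1: "int a' mod int n = (int j - k) mod int n" unfolding ia by simp
  have m2: "(int a' + 1) mod int n = (int j - k + 1) mod int n" unfolding ia by (simp add: mod_add_left_eq)
  have e1: "(p mod int n = (int j - k) mod int n) = ((p + k) mod int n = int j mod int n)"
    using mod_shift_eq[of p k n "int j - k"] by simp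
  have e2: "(p mod int n = (int j - k + 1) mod int n) = ((p + k) mod int n = (int j + 1) mod int n)"
    using mod_shift_eq[of p k n "int j - k + 1"] by (simp add: algebra_simps)
  show ?thesis unfolding a'_def[symmetric] cover_step_def m1 m2 e1 e2 by auto
qed

lemma cs_rep: assumes "3 \<le> n" "a < n"
  shows "rep n (cover_step n a p) = swap_pts (lo_pos n a) (hi_pos a) (rep n p)"
proof -
  have n2: "2 \<le> n" and n0: "0 < n" using assms by auto
  have lohi: "lo_pos n a \<noteq> hi_pos a" using assms unfolding lo_pos_def hi_pos_def by auto
  show ?thesis
  proof (cases "p mod int n = int a mod int n")
    case True
    then have "(p + 1) mod int n = (int a + 1) mod int n" by (metis mod_add_left_eq)
    then have "rep n (p+1) = hi_pos a" using rep_hi[OF n2 assms(2)] by simp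
    moreover have "rep n p = lo_pos n a" using rep_lo[OF n2 assms(2) True] .
    ultimately show ?thesis using True unfolding cover_step_def swap_pts_def by simp
  next
    case F: False
    show ?thesis
    proof (cases "p mod int n = (int a + 1) mod int n")
      case True
      then have "(p - 1) mod int n = int a mod int n"
        by (metis add_diff_cancel_right' mod_diff_left_eq)
      then have "rep n (p - 1) = lo_pos n a" using rep_lo[OF n2 assms(2)] by simp
      moreover have "rep n p = hi_pos a" using rep_hi[OF n2 assms(2) True] .
      ultimately show ?thesis using True F lohi unfolding cover_step_def swap_pts_def by simp
    next
      case False
      have "rep n p \<noteq> lo_pos n a" using F rep_range[OF n0, of p] rep_lo[OF n2 assms(2)]
        by (metis rep_eq_iff[OF n0])
      moreover have "rep n p \<noteq> hi_pos a" using False rep_range[OF n0, of p] rep_hi[OF n2 assms(2)]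
        by (metis rep_eq_iff[OF n0])
      ultimately show ?thesis using False F unfolding cover_step_def swap_pts_def by simp
    qed
  qed
qed


lemma ep_Nil[simp]: "end_pos n [] p = p" unfolding end_pos_def by simp
lemma ep_Cons[simp]: "end_pos n (a # w) p = end_pos n w (cover_step n a p)" unfolding end_pos_def by simp
lemma ep_append: "end_pos n (w1 @ w2) p = end_pos n w2 (end_pos n w1 p)" unfolding end_pos_def by simp

lemma ep_period: "end_pos n w (p + m * int n) = end_pos n w p + m * int n"
  by (induction w arbitrary: p) (auto simp: cs_period)

lemma ep_rev_inv: assumes "3 \<le> n" shows "end_pos n (rev w) (end_pos n w p) = p"
  by (induction w arbitrary: p) (auto simp: ep_append cs_inv[OF assms])

lemma ep_rev_inv2: assumes "3 \<le> n" shows "end_pos n w (end_pos n (rev w) p) = p"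
  using ep_rev_inv[OF assms, of "rev w"] by simp

lemma ep_rho: assumes "0 < n" shows "end_pos n (rho_shift n k w) p = end_pos n w (p + k) - k"
  by (induction w arbitrary: p) (auto simp: rho_shift_def cs_rho[OF assms])

lemma swap_inv[simp]: "swap_pts x y (swap_pts x y z) = z" unfolding swap_pts_def by auto

lemma phi_Cons: "phi n (a # w) = phi_gen n a \<circ> phi n w" unfolding phi_def by simp

lemma phi_ep: assumes "3 \<le> n" "letters_ok n w" shows "phi n w (rep n (end_pos n w p)) = rep n p"
  using assms(2)
proof (induction w arbitrary: p)
  case Nil then show ?case unfolding phi_def by simp
next
  case (Cons a w)
  have a: "a < n" and lw: "letters_ok n w" using Cons.prems unfolding letters_ok_def by auto
  have "phi n (a # w) (rep n (end_pos n (a # w) p)) = phi_gen n a (rep n (cover_step n a p))"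
    using Cons.IH[OF lw] by (simp add: phi_Cons)
  also have "\<dots> = rep n p" unfolding phi_gen_def cs_rep[OF assms(1) a] by simp
  finally show ?case .
qed

lemma glide_ep: assumes "3 \<le> n" "letters_ok n w" "glide n w k"
  shows "(end_pos n w p + k) mod int n = p mod int n"
proof -
  have n0: "0 < n" using assms by simp
  define j where "j = rep n (end_pos n w p)"
  have j: "1 \<le> j" "j \<le> n" "int j mod int n = end_pos n w p mod int n" using rep_range[OF n0] unfolding j_def by auto
  have "int (phi n w j) mod int n = (int j + k) mod int n" using assms(3) j unfolding glide_def by auto
  moreover have "phi n w j = rep n p" using phi_ep[OF assms(1,2)] unfolding j_def .
  ultimately have "p mod int n = (int j + k) mod int n" using rep_range[OF n0, of p] by simp
  also have "\<dots> = (end_pos n w p + k) mod int n" using j(3) by (metis mod_add_left_eq)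
  finally show ?thesis by simp
qed

lemma letters_ok_rev: "letters_ok n (rev w) = letters_ok n w" unfolding letters_ok_def by simp
lemma letters_ok_rho: "0 < n \<Longrightarrow> letters_ok n (rho_shift n k w)"
  unfolding letters_ok_def rho_shift_def by (auto simp: nat_less_iff)

lemma cross_lemma:
  assumes "3 \<le> n" "letters_ok n w"
  shows "x < y \<Longrightarrow> end_pos n w y < end_pos n w x \<Longrightarrow> (c (rep n x), c (rep n y)) \<in> cross_right n c w"
  using assms(2)
proof (induction w arbitrary: c x y)
  case Nil then show ?case by simp
next
  case (Cons a w)
  have a: "a < n" and lw: "letters_ok n w" using Cons.prems unfolding letters_ok_def by auto
  have n2: "2 \<le> n" using assms by simp
  define c' where "c' = c \<circ> swap_pts (lo_pos n a) (hi_pos a)"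
  define x' where "x' = cover_step n a x"
  define y' where "y' = cover_step n a y"
  have cx: "c' (rep n x') = c (rep n x)" unfolding c'_def x'_def cs_rep[OF assms(1) a] by simp
  have cy: "c' (rep n y') = c (rep n y)" unfolding c'_def y'_def cs_rep[OF assms(1) a] by simp
  have E: "end_pos n w y' < end_pos n w x'" using Cons.prems unfolding x'_def y'_def by simp
  show ?case
  proof (cases "x' < y'")
    case True
    then have "(c' (rep n x'), c' (rep n y')) \<in> cross_right n c' w" using Cons.IH[OF _ E lw] by blast
    then show ?thesis using cx cy unfolding c'_def by simp
  next
    case False
    have "x' \<noteq> y'" using Cons.prems(1) cs_inv[OF assms(1), of a x] cs_inv[OF assms(1), of a y]
      unfolding x'_def y'_def by auto
    then have "y' < x'" using False by simp
    then have xy: "x' = x + 1" "y = x + 1" using cs_bound[of n a x] cs_bound[of n a y] Cons.prems(1)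
      unfolding x'_def y'_def by auto
    have xm: "x mod int n = int a mod int n" using cs_up xy(1) unfolding x'_def by blast
    have "rep n x = lo_pos n a" using rep_lo[OF n2 a xm] .
    moreover have "rep n y = hi_pos a" using rep_hi[OF n2 a] xy(2) xm by (metis mod_add_left_eq)
    ultimately show ?thesis by simp
  qed
qed

lemma cross_left_flip: "cross_left n c w = (\<lambda>(x, y). (y, x)) ` cross_right n c w"
  by (induction w arbitrary: c) auto


lemma label_lemma:
  fixes E :: "int \<Rightarrow> int"
  assumes n: "3 \<le> n"
    and per: "\<And>p m. E (p + m * int n) = E p + m * int n"
    and cong: "\<And>p. (E p - p) mod int n = (E 1 - 1) mod int n"
    and i: "1 \<le> i" "i \<le> n"
  shows "chamber_label n {b. E b \<le> E 1} i
         = ((E 1 - 1) - (E (int i) - int i)) div int n + (if i = 1 then 1 else 0)"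
proof -
  have n0: "0 < n" using n by simp
  define Di where "Di = E (int i) - int i"
  define D1 where "D1 = E 1 - 1"
  define M where "M = (D1 - Di) div int n"
  have dv: "int n dvd D1 - Di" using cong[of "int i"] unfolding Di_def D1_def
    by (metis mod_eq_dvd_iff)
  have DM: "D1 - Di = M * int n" unfolding M_def using dv by simp
  have char: "E b \<le> E 1 \<longleftrightarrow> b \<le> 1 + M * int n" if "b mod int n = int i mod int n" for b
  proof -
    define q where "q = (b - int i) div int n"
    have "int n dvd b - int i" using that by (metis mod_eq_dvd_iff)
    then have b: "b = int i + q * int n" unfolding q_def by simp
    have "E b = E (int i) + q * int n" using per b by simp
    then have "E b = b + Di" unfolding Di_def using b by simp
    then show ?thesis using DM unfolding D1_def by auto
  qed
  define g where "g = (if i = 1 then int i else int i - int n) + M * int n"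
  have gm: "g mod int n = int i mod int n" unfolding g_def by simp
  have gle: "g \<le> 1 + M * int n" unfolding g_def using i by auto
  have G: "(GREATEST b. b \<in> {b. E b \<le> E 1} \<and> b mod int n = int i mod int n) = g"
  proof (rule Greatest_equality)
    show "g \<in> {b. E b \<le> E 1} \<and> g mod int n = int i mod int n" using gm gle char[OF gm] by simp
  next
    fix y assume y: "y \<in> {b. E b \<le> E 1} \<and> y mod int n = int i mod int n"
    then have yle: "y \<le> 1 + M * int n" using char[of y] by auto
    have "int n dvd y - g" using y gm by (metis mod_eq_dvd_iff)
    then obtain r where r: "y - g = int n * r" by (auto elim: dvdE)
    have "y - g < int n" using yle i unfolding g_def by auto
    then have "r \<le> 0" using r n0
      by (metis linorder_not_le mult.right_neutral mult_le_cancel_left_pos of_nat_0_less_iff zero_less_one_class.zero_le_one int_one_le_iff_zero_less)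
    then have "int n * r \<le> 0" using n0 by (simp add: mult_nonneg_nonpos)
    then show "y \<le> g" using r by simp
  qed
  have C: "\<lceil>real_of_int g / real n\<rceil> = M + (if i = 1 then 1 else 0)"
  proof (rule ceiling_unique)
    have rn: "real n > 0" using n0 by simp
    have eq: "real_of_int g / real n = (if i = 1 then real i else real i - real n) / real n + real_of_int M"
      unfolding g_def using rn by (auto simp: field_simps)
    show "real_of_int (M + (if i = 1 then 1 else 0)) - 1 < real_of_int g / real n"
      unfolding eq using i rn n by (auto simp: field_simps)
    show "real_of_int g / real n \<le> real_of_int (M + (if i = 1 then 1 else 0))"
      unfolding eq using i rn n by (auto simp: field_simps)
  qed
  show ?thesis unfolding chamber_label_def G C M_def D1_def Di_def by simp
qed


lemma glide_cong:
  assumes "3 \<le> n" "letters_ok n w" "glide n w k"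
  shows "(end_pos n w p - p) mod int n = (end_pos n w 1 - 1) mod int n"
proof -
  have a: "int n dvd (end_pos n w p + k) - p" using glide_ep[OF assms, of p] by (metis mod_eq_dvd_iff)
  have b: "int n dvd (end_pos n w 1 + k) - 1" using glide_ep[OF assms, of 1] by (metis mod_eq_dvd_iff)
  have "int n dvd ((end_pos n w p + k) - p) - ((end_pos n w 1 + k) - 1)" using a b by (rule dvd_diff)
  then have "int n dvd (end_pos n w p - p) - (end_pos n w 1 - 1)" by (simp add: algebra_simps)
  then show ?thesis by (metis mod_eq_dvd_iff)
qed

lemma traj_lemma:
  assumes n: "3 \<le> n" and g: "\<And>p. (end_pos n w p - p) mod int n = (end_pos n w 1 - 1) mod int n" and tr: "traj_rep n w t"
  shows "\<exists>C. \<forall>i\<in>{1..n}. t i = ((end_pos n w 1 - 1) - (end_pos n w (int i) - int i)) div int n + C"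
proof -
  obtain C where C: "\<forall>i\<in>{1..n}. t i = chamber_label n {b. end_pos n w b \<le> end_pos n w 1} i
            - chamber_label n {b. b \<le> 1} i + C" using tr unfolding traj_rep_def by blast
  have "t i = ((end_pos n w 1 - 1) - (end_pos n w (int i) - int i)) div int n + C" if i: "i \<in> {1..n}" for i
  proof -
    have R: "chamber_label n {b. end_pos n w b \<le> end_pos n w 1} i
         = ((end_pos n w 1 - 1) - (end_pos n w (int i) - int i)) div int n + (if i = 1 then 1 else 0)"
      using label_lemma[of n "end_pos n w" i] n i ep_period g by auto
    have L: "chamber_label n {b. b \<le> 1} i = (if i = 1 then 1 else 0)"
      using label_lemma[of n "\<lambda>p. p" i] n i by auto
    show ?thesis using C i R L by simp
  qed
  then show ?thesis by blast
qed

lemma traj_lt: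
  fixes F :: "int \<Rightarrow> int"
  assumes n: "3 \<le> n"
    and cong: "\<And>p. (F p - p) mod int n = (F 1 - 1) mod int n"
    and t: "\<forall>i\<in>{1..n}. t i = ((F 1 - 1) - (F (int i) - int i)) div int n + C"
    and ij: "i \<in> {1..n}" "j \<in> {1..n}" and lt: "t i < t j"
  shows "F (int j) - int j + int n \<le> F (int i) - int i"
proof -
  have dvi: "int n dvd (F 1 - 1) - (F (int i) - int i)" using cong[of "int i"] by (metis mod_eq_dvd_iff)
  have dvj: "int n dvd (F 1 - 1) - (F (int j) - int j)" using cong[of "int j"] by (metis mod_eq_dvd_iff)
  obtain a where a: "(F 1 - 1) - (F (int i) - int i) = int n * a" using dvi by (auto elim: dvdE)
  obtain b where b: "(F 1 - 1) - (F (int j) - int j) = int n * b" using dvj by (auto elim: dvdE)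
  have n0: "int n > 0" using n by simp
  have "a < b" using lt t ij a b n0 by simp
  then have "int n * (a + 1) \<le> int n * b" using n0 by simp
  then show ?thesis using a b by (simp add: algebra_simps)
qed

lemma traj_const:
  fixes F :: "int \<Rightarrow> int"
  assumes n: "3 \<le> n"
    and per: "\<And>p m. F (p + m * int n) = F p + m * int n"
    and cong: "\<And>p. (F p - p) mod int n = (F 1 - 1) mod int n"
    and t: "\<forall>i\<in>{1..n}. t i = ((F 1 - 1) - (F (int i) - int i)) div int n + C"
    and eq: "\<forall>i\<in>{1..n}. t i = t 1"
  shows "F p = p + (F 1 - 1)"
proof -
  have n0: "0 < n" using n by simp
  have D: "F (int i) - int i = F 1 - 1" if i: "i \<in> {1..n}" for i
  proof -
    have dvi: "int n dvd (F 1 - 1) - (F (int i) - int i)" using cong[of "int i"] by (metis mod_eq_dvd_iff)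
    obtain a where a: "(F 1 - 1) - (F (int i) - int i) = int n * a" using dvi by (auto elim: dvdE)
    have "t i = t 1" using eq i by blast
    then have "a = 0" using t i a n0 by auto
    then show ?thesis using a by simp
  qed
  define r where "r = rep n p"
  have r: "1 \<le> r" "r \<le> n" "int r mod int n = p mod int n" using rep_range[OF n0] unfolding r_def by auto
  have "int n dvd p - int r" using r(3) by (metis mod_eq_dvd_iff)
  then obtain m where m: "p - int r = int n * m" by (auto elim: dvdE)
  have "F p = F (int r + m * int n)" using m by (simp add: algebra_simps)
  also have "\<dots> = F (int r) + m * int n" using per by simp
  also have "\<dots> = p + (F 1 - 1)" using D[of r] r m by (simp add: algebra_simps)
  finally show ?thesis .
qed

lemma gen_cross:
  fixes F :: "int \<Rightarrow> int"
  assumes n: "3 \<le> n"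
    and per: "\<And>p m. F (p + m * int n) = F p + m * int n"
    and ij: "i \<in> {1..n}" "j \<in> {1..n}" "i \<noteq> j"
    and D: "F (int j) - int j + int n \<le> F (int i) - int i"
  shows "\<exists>y. int i < y \<and> F y < F (int i) \<and> y mod int n = int j mod int n"
proof -
  define y where "y = (if i < j then int j else int j + int n)"
  have Fy: "F y = F (int j) + (y - int j)" unfolding y_def using per[of "int j" 1] by auto
  have "int i < y" "y < int i + int n" unfolding y_def using ij by auto
  moreover have "y mod int n = int j mod int n" unfolding y_def by simp
  ultimately show ?thesis using Fy D by (intro exI[of _ y]) auto
qed

lemma double_cross:
  assumes n: "3 \<le> n" and lw: "letters_ok n w" and ne: "w \<noteq> []"
    and tr: "\<And>p. end_pos n w p = p + d"
  shows "\<exists>x y. (x, y) \<in> cross_right n id w \<and> (y, x) \<in> cross_right n id w"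
proof -
  obtain a w' where w: "w = a # w'" using ne by (cases w) auto
  have a: "a < n" and lw': "letters_ok n w'" using lw unfolding w letters_ok_def by auto
  have n2: "2 \<le> n" and n0: "0 < n" using n by auto
  define lo where "lo = lo_pos n a"
  define hi where "hi = hi_pos a"
  have r1: "rep n (int a) = lo" unfolding lo_def using rep_lo[OF n2 a] by simp
  have r2: "rep n (int a + 1) = hi" unfolding hi_def using rep_hi[OF n2 a] by simp
  have c1: "cover_step n a (int a) = int a + 1" unfolding cover_step_def by simp
  have c2: "cover_step n a (int a + 1) = int a"
    unfolding cover_step_def using mod_succ_ne[OF n2, of "int a"] by simp
  have e1: "end_pos n w' (int a) = int a + 1 + d" using tr[of "int a + 1"] c2 unfolding w by simp
  have e2: "end_pos n w' (int a + 1) = int a + d" using tr[of "int a"] c1 unfolding w by simp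
  have "(swap_pts lo hi (rep n (int a)), swap_pts lo hi (rep n (int a + 1))) \<in> cross_right n (id \<circ> swap_pts lo hi) w'"
    using cross_lemma[OF n lw', of "int a" "int a + 1" "id \<circ> swap_pts lo hi"] e1 e2 by simp
  moreover have "lo \<noteq> hi" using n a unfolding lo_def hi_def lo_pos_def hi_pos_def by auto
  ultimately have "(hi, lo) \<in> cross_right n id w" unfolding w r1 r2
    by (simp add: swap_pts_def lo_def hi_def)
  moreover have "(lo, hi) \<in> cross_right n id w" unfolding w lo_def hi_def by simp
  ultimately show ?thesis by blast
qed


lemma sign_lemma:
  fixes \<alpha> :: "nat \<Rightarrow> real" and s :: "nat \<Rightarrow> int" and b c :: real
  assumes bc: "b < c"
    and sep: "\<forall>j\<in>{1..n}. \<alpha> j < b \<or> c < \<alpha> j"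
    and pr: "(\<Prod>j=1..n. b - \<alpha> j) = (\<Prod>j=1..n. c - \<alpha> j)"
    and mono: "\<forall>i\<in>{1..n}. \<forall>j\<in>{1..n}. \<alpha> j < \<alpha> i \<longrightarrow> s j \<le> s i"
    and nc: "\<exists>i\<in>{1..n}. \<exists>j\<in>{1..n}. s i \<noteq> s j"
  shows "0 < (\<Sum>j=1..n. real_of_int (s j) * ln ((b - \<alpha> j) / (c - \<alpha> j)))"
proof -
  define L where "L j = ln ((b - \<alpha> j) / (c - \<alpha> j))" for j
  have Lneg: "L j < 0" if "j \<in> {1..n}" "\<alpha> j < b" for j
  proof -
    have "0 < (b - \<alpha> j) / (c - \<alpha> j)" "(b - \<alpha> j) / (c - \<alpha> j) < 1" using that bc by auto
    then show ?thesis unfolding L_def by simp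
  qed
  have Lpos: "0 < L j" if "j \<in> {1..n}" "c < \<alpha> j" for j
  proof -
    have "1 < (b - \<alpha> j) / (c - \<alpha> j)" using that bc by (simp add: divide_simps)
    then show ?thesis unfolding L_def by simp
  qed
  have nz: "c - \<alpha> j \<noteq> 0" "b - \<alpha> j \<noteq> 0" if "j \<in> {1..n}" for j using sep that bc by force+
  have pnz: "(\<Prod>j=1..n. c - \<alpha> j) \<noteq> 0" using nz by simp
  have sumL: "(\<Sum>j=1..n. L j) = 0"
  proof -
    have "(\<Sum>j=1..n. L j) = ln (\<Prod>j=1..n. (b - \<alpha> j) / (c - \<alpha> j))"
      unfolding L_def using nz by (subst ln_prod) auto
    also have "\<dots> = ln 1" unfolding prod_dividef pr using pnz by simp
    finally show ?thesis by simp
  qed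
  define Lw where "Lw = {j\<in>{1..n}. \<alpha> j < b}"
  define c0 where "c0 = (if Lw = {} then Min (s ` {1..n}) else Max (s ` Lw))"
  have fin: "finite Lw" unfolding Lw_def by simp
  have le1: "s j \<le> c0" if "j \<in> Lw" for j
    using that fin unfolding c0_def by auto
  have ge1: "c0 \<le> s j" if "j \<in> {1..n}" "j \<notin> Lw" for j
  proof (cases "Lw = {}")
    case True then show ?thesis unfolding c0_def using that by auto
  next
    case False
    have "Max (s ` Lw) \<in> s ` Lw" using False fin by simp
    then obtain j0 where j0: "j0 \<in> Lw" "Max (s ` Lw) = s j0" by auto
    have "c < \<alpha> j" using that sep unfolding Lw_def by auto
    then have "\<alpha> j0 < \<alpha> j" using j0 bc unfolding Lw_def by auto
    then have "s j0 \<le> s j" using mono j0 that unfolding Lw_def by auto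
    then show ?thesis unfolding c0_def using False j0 by simp
  qed
  have terms: "0 \<le> real_of_int (s j - c0) * L j" if "j \<in> {1..n}" for j
  proof (cases "j \<in> Lw")
    case True
    then show ?thesis using le1[OF True] Lneg[OF that] unfolding Lw_def
      by (auto intro: mult_nonpos_nonpos)
  next
    case False
    then have "c < \<alpha> j" using sep that unfolding Lw_def by auto
    then show ?thesis using ge1[OF that False] Lpos[OF that] by auto
  qed
  obtain j where j: "j \<in> {1..n}" "s j \<noteq> c0" using nc by metis
  have jpos: "0 < real_of_int (s j - c0) * L j"
  proof (cases "j \<in> Lw")
    case True
    then have "s j < c0" using le1 j by force
    then show ?thesis using Lneg[OF j(1)] True unfolding Lw_def by (auto intro: mult_neg_neg)
  next
    case False
    then have "c < \<alpha> j" using sep j unfolding Lw_def by auto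
    moreover have "c0 < s j" using ge1[OF j(1) False] j by simp
    ultimately show ?thesis using Lpos[OF j(1)] by auto
  qed
  have "0 < (\<Sum>j=1..n. real_of_int (s j - c0) * L j)"
    by (rule sum_pos2[where i=j and f="\<lambda>j. real_of_int (s j - c0) * L j"]) (use j jpos terms in auto)
  also have "(\<Sum>j=1..n. real_of_int (s j - c0) * L j)
      = (\<Sum>j=1..n. real_of_int (s j) * L j) - real_of_int c0 * (\<Sum>j=1..n. L j)"
    by (simp only: of_int_diff left_diff_distrib sum_subtractf sum_distrib_left mult.assoc)
  finally show ?thesis using sumL unfolding L_def by simp
qed

lemma comp_sep:
  fixes \<alpha> :: "nat \<Rightarrow> real"
  assumes "connected_component (UNIV - \<alpha> ` {1..n}) b c"
  shows "\<forall>j\<in>{1..n}. \<alpha> j < min b c \<or> max b c < \<alpha> j"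
proof
  fix j assume j: "j \<in> {1..n}"
  obtain T where T: "connected T" "T \<subseteq> UNIV - \<alpha> ` {1..n}" "b \<in> T" "c \<in> T"
    using assms unfolding connected_component_def by blast
  have iv: "is_interval T" using T(1) is_interval_connected_1 by blast
  show "\<alpha> j < min b c \<or> max b c < \<alpha> j"
  proof (rule ccontr)
    assume "\<not> ?thesis"
    then have "min b c \<le> \<alpha> j" "\<alpha> j \<le> max b c" by auto
    moreover have "min b c \<in> T" "max b c \<in> T" using T(3,4) by (auto simp: min_def max_def)
    moreover have "\<forall>a\<in>T. \<forall>b\<in>T. \<forall>x. a \<le> x \<and> x \<le> b \<longrightarrow> x \<in> T" using iv unfolding is_interval_1 .
    ultimately have "\<alpha> j \<in> T" by blast
    then show False using T(2) j by auto
  qed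
qed

theorem proposition8p5:
  fixes n :: nat and u v :: "nat list" and k2 :: int and \<alpha> :: "nat \<Rightarrow> real"
    and b c :: real and t t' :: "nat \<Rightarrow> int"
  assumes "n \<ge> 3"
    and "u \<noteq> []" and "v \<noteq> []"
    and "reduced_word n u" and "reduced_word n v" and "reduced_word n (v @ u)"
    and "\<exists>k1. glide n u k1" and "glide n v k2"
    and "\<forall>i j. wire_tri n v u i j \<longrightarrow> \<alpha> i < \<alpha> j"
    and "traj_rep n u t" and "traj_rep n (rho_shift n k2 v) t'"
    and "b \<noteq> c" and "connected_component (UNIV - \<alpha> ` {1..n}) b c"
    and "(\<Prod>j=1..n. b - \<alpha> j) = (\<Prod>j=1..n. c - \<alpha> j)"
  shows "(\<Sum>j=1..n. real_of_int (t' j) * ln ((b - \<alpha> j) / (c - \<alpha> j)))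
         / (\<Sum>j=1..n. real_of_int (t j) * ln ((b - \<alpha> j) / (c - \<alpha> j))) > 0"
proof -
  note A = assms
  have n: "3 \<le> n" using A(1) .
  have n0: "0 < n" and n2: "2 \<le> n" using n by auto
  have lu: "letters_ok n u" using A(4) unfolding reduced_word_def by blast
  have lv: "letters_ok n v" using A(5) unfolding reduced_word_def by blast
  have lrv: "letters_ok n (rev v)" using lv letters_ok_rev by blast
  obtain k1 where gu: "glide n u k1" using A(7) by blast
  have gv: "glide n v k2" using A(8) .
  have WT: "\<alpha> i < \<alpha> j" if "(i, j) \<in> cross_right n id u \<or> (j, i) \<in> cross_right n id (rev v)" for i j
  proof -
    have "(i, j) \<in> cross_right n id u \<union> cross_left n id (rev v)"
    proof (cases "(i, j) \<in> cross_right n id u")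
      case False
      then have "(j, i) \<in> cross_right n id (rev v)" using that by blast
      then have "(i, j) \<in> (\<lambda>(x, y). (y, x)) ` cross_right n id (rev v)"
        by (rule rev_image_eqI) simp
      then show ?thesis unfolding cross_left_flip by blast
    qed simp
    then have "wire_tri n v u i j" unfolding wire_tri_def .
    then show ?thesis using A(9) by blast
  qed
  define Eu where "Eu = end_pos n u"
  define Ev where "Ev = end_pos n v"
  define Et where "Et = end_pos n (rho_shift n k2 v)"
  have Et: "Et p = Ev (p + k2) - k2" for p unfolding Et_def Ev_def using ep_rho[OF n0] by simp
  have perU: "Eu (p + m * int n) = Eu p + m * int n" for p m unfolding Eu_def by (rule ep_period)
  have perT: "Et (p + m * int n) = Et p + m * int n" for p m unfolding Et_def by (rule ep_period)
  have congU: "(Eu p - p) mod int n = (Eu 1 - 1) mod int n" for p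
    unfolding Eu_def using glide_cong[OF n lu gu] .
  have congT: "(Et p - p) mod int n = (Et 1 - 1) mod int n" for p
  proof -
    have "(Et p - p) mod int n = (Ev 1 - 1) mod int n"
      using glide_cong[OF n lv gv, of "p + k2"] unfolding Et Ev_def by (simp add: algebra_simps)
    moreover have "(Et 1 - 1) mod int n = (Ev 1 - 1) mod int n"
      using glide_cong[OF n lv gv, of "1 + k2"] unfolding Et Ev_def by (simp add: algebra_simps)
    ultimately show ?thesis by simp
  qed
  obtain Cu where Cu: "\<forall>i\<in>{1..n}. t i = ((Eu 1 - 1) - (Eu (int i) - int i)) div int n + Cu"
    using traj_lemma[OF n _ A(10)] congU unfolding Eu_def by blast
  obtain Ct where Ct: "\<forall>i\<in>{1..n}. t' i = ((Et 1 - 1) - (Et (int i) - int i)) div int n + Ct"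
    using traj_lemma[OF n _ A(11)] congT unfolding Et_def by blast
  have monoU: "\<forall>i\<in>{1..n}. \<forall>j\<in>{1..n}. \<alpha> j < \<alpha> i \<longrightarrow> t j \<le> t i"
  proof (intro ballI impI)
    fix i j assume ij: "i \<in> {1..n}" "j \<in> {1..n}" and aji: "\<alpha> j < \<alpha> i"
    show "t j \<le> t i"
    proof (rule ccontr)
      assume "\<not> t j \<le> t i"
      then have lt: "t i < t j" by simp
      then have ne: "i \<noteq> j" by auto
      have D: "Eu (int j) - int j + int n \<le> Eu (int i) - int i"
        using traj_lt[OF n congU Cu ij lt] .
      obtain y where y: "int i < y" "Eu y < Eu (int i)" "y mod int n = int j mod int n"
        using gen_cross[OF n perU ij ne D] by blast
      have "(id (rep n (int i)), id (rep n y)) \<in> cross_right n id u"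
        using cross_lemma[OF n lu y(1)] y(2) unfolding Eu_def by blast
      moreover have "rep n (int i) = i" using rep_of_nat[OF n0] ij by auto
      moreover have "rep n y = j" using rep_eq_iff[OF n0] ij y(3) by auto
      ultimately have "\<alpha> i < \<alpha> j" using WT by auto
      then show False using aji by simp
    qed
  qed
  have monoT: "\<forall>i\<in>{1..n}. \<forall>j\<in>{1..n}. \<alpha> j < \<alpha> i \<longrightarrow> t' j \<le> t' i"
  proof (intro ballI impI)
    fix i j assume ij: "i \<in> {1..n}" "j \<in> {1..n}" and aji: "\<alpha> j < \<alpha> i"
    show "t' j \<le> t' i"
    proof (rule ccontr)
      assume "\<not> t' j \<le> t' i"
      then have lt: "t' i < t' j" by simp
      then have ne: "i \<noteq> j" by auto
      have D: "Et (int j) - int j + int n \<le> Et (int i) - int i"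
        using traj_lt[OF n congT Ct ij lt] .
      obtain y where y: "int i < y" "Et y < Et (int i)" "y mod int n = int j mod int n"
        using gen_cross[OF n perT ij ne D] by blast
      define p where "p = Ev (y + k2)"
      define q where "q = Ev (int i + k2)"
      have pq: "p < q" using y(2) unfolding p_def q_def Et by simp
      have rp: "end_pos n (rev v) p = y + k2" unfolding p_def Ev_def using ep_rev_inv[OF n] by simp
      have rq: "end_pos n (rev v) q = int i + k2" unfolding q_def Ev_def using ep_rev_inv[OF n] by simp
      have "(id (rep n p), id (rep n q)) \<in> cross_right n id (rev v)"
        using cross_lemma[OF n lrv pq, of id] rp rq y(1) by simp
      moreover have "rep n p = j"
      proof -
        have "(p + k2) mod int n = (y + k2) mod int n" unfolding p_def Ev_def using glide_ep[OF n lv gv] .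
        then have "p mod int n = y mod int n" using mod_shift_eq by blast
        then show ?thesis using rep_eq_iff[OF n0] ij y(3) by auto
      qed
      moreover have "rep n q = i"
      proof -
        have "(q + k2) mod int n = (int i + k2) mod int n" unfolding q_def Ev_def using glide_ep[OF n lv gv] .
        then have "q mod int n = int i mod int n" using mod_shift_eq by blast
        then show ?thesis using rep_eq_iff[OF n0] ij by auto
      qed
      ultimately have "\<alpha> i < \<alpha> j" using WT by auto
      then show False using aji by simp
    qed
  qed
  have ncU: "\<exists>i\<in>{1..n}. \<exists>j\<in>{1..n}. t i \<noteq> t j"
  proof (rule ccontr)
    assume "\<not> ?thesis"
    then have eq: "\<forall>i\<in>{1..n}. t i = t 1" using n by (metis atLeastAtMost_iff le_numeral_extra(4) le_trans one_le_numeral)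
    have "Eu p = p + (Eu 1 - 1)" for p by (rule traj_const[OF n perU congU Cu eq])
    then obtain x y where "(x, y) \<in> cross_right n id u" "(y, x) \<in> cross_right n id u"
      using double_cross[OF n lu A(2), of "Eu 1 - 1"] unfolding Eu_def by blast
    then have "\<alpha> x < \<alpha> y" "\<alpha> y < \<alpha> x" using WT by auto
    then show False by simp
  qed
  have ncT: "\<exists>i\<in>{1..n}. \<exists>j\<in>{1..n}. t' i \<noteq> t' j"
  proof (rule ccontr)
    assume "\<not> ?thesis"
    then have eq: "\<forall>i\<in>{1..n}. t' i = t' 1" using n by (metis atLeastAtMost_iff le_numeral_extra(4) le_trans one_le_numeral)
    have e: "Et p = p + (Et 1 - 1)" for p by (rule traj_const[OF n perT congT Ct eq])
    define d where "d = Et 1 - 1"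
    have ev: "Ev p = p + d" for p using e[of "p - k2"] unfolding Et d_def by simp
    have er: "end_pos n (rev v) p = p + (- d)" for p
      using ep_rev_inv[OF n, of v "p - d"] ev[of "p - d"] unfolding Ev_def by simp
    have "rev v \<noteq> []" using A(3) by simp
    then obtain x y where "(x, y) \<in> cross_right n id (rev v)" "(y, x) \<in> cross_right n id (rev v)"
      using double_cross[OF n lrv _ er] by blast
    then have "\<alpha> x < \<alpha> y" "\<alpha> y < \<alpha> x" using WT by auto
    then show False by simp
  qed
  have sep: "\<forall>j\<in>{1..n}. \<alpha> j < min b c \<or> max b c < \<alpha> j" using comp_sep[OF A(13)] .
  show ?thesis
  proof (cases "b < c")
    case True
    have s1: "\<forall>j\<in>{1..n}. \<alpha> j < b \<or> c < \<alpha> j" using sep True by (auto simp: min_def max_def)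
    have "0 < (\<Sum>j=1..n. real_of_int (t' j) * ln ((b - \<alpha> j) / (c - \<alpha> j)))"
      using sign_lemma[OF True s1 A(14) monoT ncT] .
    moreover have "0 < (\<Sum>j=1..n. real_of_int (t j) * ln ((b - \<alpha> j) / (c - \<alpha> j)))"
      using sign_lemma[OF True s1 A(14) monoU ncU] .
    ultimately show ?thesis by simp
  next
    case False
    then have cb: "c < b" using A(12) by simp
    have s1: "\<forall>j\<in>{1..n}. \<alpha> j < c \<or> b < \<alpha> j" using sep cb by (auto simp: min_def max_def)
    have flip: "ln ((b - \<alpha> j) / (c - \<alpha> j)) = - ln ((c - \<alpha> j) / (b - \<alpha> j))" for j
      using ln_inverse[of "(c - \<alpha> j) / (b - \<alpha> j)"] by simp
    have X: "0 < (\<Sum>j=1..n. real_of_int (t' j) * ln ((c - \<alpha> j) / (b - \<alpha> j)))"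
      using sign_lemma[OF cb s1 A(14)[symmetric] monoT ncT] .
    have Y: "0 < (\<Sum>j=1..n. real_of_int (t j) * ln ((c - \<alpha> j) / (b - \<alpha> j)))"
      using sign_lemma[OF cb s1 A(14)[symmetric] monoU ncU] .
    have "(\<Sum>j=1..n. real_of_int (t' j) * ln ((b - \<alpha> j) / (c - \<alpha> j)))
       = - (\<Sum>j=1..n. real_of_int (t' j) * ln ((c - \<alpha> j) / (b - \<alpha> j)))"
      unfolding flip by (simp add: sum_negf)
    moreover have "(\<Sum>j=1..n. real_of_int (t j) * ln ((b - \<alpha> j) / (c - \<alpha> j)))
       = - (\<Sum>j=1..n. real_of_int (t j) * ln ((c - \<alpha> j) / (b - \<alpha> j)))"
      unfolding flip by (simp add: sum_negf)
    ultimately show ?thesis using X Y by simp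
  qed
qed

end
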